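(* Let $R\in[0,\tfrac34]$. Suppose the algorithm described in the context is run with penalty functions $f_j:[0,1]\to[0,1]$ ($j\in S$, possibly chosen depending on the advice $A$) that are continuous, nondecreasing, and satisfy $$1-\frac{1-R}{x}\;\le\; f_j(x)\;\le\;\frac{1-R}{1-x}\qquad\text{for all }x\in(0,1)$$ (and $f_j(1)\ge R$). Then for every instance $G$ and every advice $A$, $\mathsf{ALG}(G,A)\ge R\cdot \mathsf{OPT}(G)$; i.e. the algorithm is $R$-robust.
   Context: Setting (two-stage vertex-weighted bipartite matching with advice). A bipartite graph $G=(D,S,E)$ has offline vertices $S$, each $j\in S$ carrying a weight $w_j\ge 0$, and online vertices $D=D_1\sqcup D_2$ arriving in two stages. $E_1$ (resp. $E_2$) denotes the set of edges between $D_1$ (resp. $D_2$) and $S$. The advice is a matching $A\subseteq E_1$. $\mathsf{OPT}(G)$ denotes the maximum of $\sum_{j\in S\text{ covered by }M}w_j$ over all matchings $M\subseteq E$. Algorithm (parameters: functions $f_j:[0,1]\to[0,1]$, $j\in S$). First stage: after $D_1,E_1,A$ are revealed, let $\bar x$ be an optimal solution of (P1): maximize $\sum_{j\in S} w_j\bigl(x_j-\int_0^{x_j}f_j(t)\,dt\bigr)$ subject to $x_i:=\sum_{j:(i,j)\in E_1}x_{ij}\le 1$ ($i\in D_1$), $x_j:=\sum_{i:(i,j)\in E_1}x_{ij}\le 1$ ($j\in S$), $x_{ij}\ge0$. Second stage: after $D_2,E_2$ are revealed, let $\bar y$ be an optimal solution of (P2): maximize $\sum_{j\in S}w_jy_j$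 subject to $y_i:=\sum_{j:(i,j)\in E_2}y_{ij}\le 1$ ($i\in D_2$), $y_j:=\sum_{i:(i,j)\in E_2}y_{ij}\le 1-\bar x_j$ ($j\in S$), $y_{ij}\ge 0$. The algorithm's value is $\mathsf{ALG}(G,A)=\sum_{j\in S}w_j(\bar x_j+\bar y_j)$. *)

theory Defs
  imports "HOL-Analysis.Analysis"
begin

text \<open>Bipartite graphs: online vertices of type 'd, offline vertices of type 's;
  an edge is a pair (i, j) with i online and j offline.\<close>

definition is_matching :: "('d \<times> 's) set \<Rightarrow> bool" where
  "is_matching M \<longleftrightarrow>
     (\<forall>e1\<in>M. \<forall>e2\<in>M. e1 \<noteq> e2 \<longrightarrow> fst e1 \<noteq> fst e2 \<and> snd e1 \<noteq> snd e2)"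

definition OPT :: "('s \<Rightarrow> real) \<Rightarrow> ('d \<times> 's) set \<Rightarrow> real" where
  "OPT w E = Max {(\<Sum>j\<in>snd ` M. w j) | M. M \<subseteq> E \<and> is_matching M}"

definition load_on :: "('d \<times> 's) set \<Rightarrow> ('d \<times> 's \<Rightarrow> real) \<Rightarrow> 'd \<Rightarrow> real" where
  "load_on E x i = (\<Sum>e\<in>{e\<in>E. fst e = i}. x e)"

definition load_off :: "('d \<times> 's) set \<Rightarrow> ('d \<times> 's \<Rightarrow> real) \<Rightarrow> 's \<Rightarrow> real" where
  "load_off E x j = (\<Sum>e\<in>{e\<in>E. snd e = j}. x e)"

definition feasible1 :: "'d set \<Rightarrow> 's set \<Rightarrow> ('d \<times> 's) set \<Rightarrow> ('d \<times> 's \<Rightarrow> real) \<Rightarrow> bool" where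
  "feasible1 D1 S E1 x \<longleftrightarrow>
     (\<forall>e\<in>E1. 0 \<le> x e) \<and>
     (\<forall>i\<in>D1. load_on E1 x i \<le> 1) \<and>
     (\<forall>j\<in>S. load_off E1 x j \<le> 1)"

definition obj1 :: "'s set \<Rightarrow> ('s \<Rightarrow> real) \<Rightarrow> ('s \<Rightarrow> real \<Rightarrow> real) \<Rightarrow> ('d \<times> 's) set
    \<Rightarrow> ('d \<times> 's \<Rightarrow> real) \<Rightarrow> real" where
  "obj1 S w f E1 x =
     (\<Sum>j\<in>S. w j * (load_off E1 x j - integral {0..load_off E1 x j} (f j)))"

definition optimal1 :: "'d set \<Rightarrow> 's set \<Rightarrow> ('s \<Rightarrow> real) \<Rightarrow> ('s \<Rightarrow> real \<Rightarrow> real)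
    \<Rightarrow> ('d \<times> 's) set \<Rightarrow> ('d \<times> 's \<Rightarrow> real) \<Rightarrow> bool" where
  "optimal1 D1 S w f E1 x \<longleftrightarrow>
     feasible1 D1 S E1 x \<and>
     (\<forall>x'. feasible1 D1 S E1 x' \<longrightarrow> obj1 S w f E1 x' \<le> obj1 S w f E1 x)"

definition feasible2 :: "'d set \<Rightarrow> 's set \<Rightarrow> ('d \<times> 's) set \<Rightarrow> ('s \<Rightarrow> real)
    \<Rightarrow> ('d \<times> 's \<Rightarrow> real) \<Rightarrow> bool" where
  "feasible2 D2 S E2 xs y \<longleftrightarrow>
     (\<forall>e\<in>E2. 0 \<le> y e) \<and>
     (\<forall>i\<in>D2. load_on E2 y i \<le> 1) \<and>
     (\<forall>j\<in>S. load_off E2 y j \<le> 1 - xs j)"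

definition obj2 :: "'s set \<Rightarrow> ('s \<Rightarrow> real) \<Rightarrow> ('d \<times> 's) set \<Rightarrow> ('d \<times> 's \<Rightarrow> real) \<Rightarrow> real" where
  "obj2 S w E2 y = (\<Sum>j\<in>S. w j * load_off E2 y j)"

definition optimal2 :: "'d set \<Rightarrow> 's set \<Rightarrow> ('s \<Rightarrow> real) \<Rightarrow> ('d \<times> 's) set \<Rightarrow> ('s \<Rightarrow> real)
    \<Rightarrow> ('d \<times> 's \<Rightarrow> real) \<Rightarrow> bool" where
  "optimal2 D2 S w E2 xs y \<longleftrightarrow>
     feasible2 D2 S E2 xs y \<and>
     (\<forall>y'. feasible2 D2 S E2 xs y' \<longrightarrow> obj2 S w E2 y' \<le> obj2 S w E2 y)"

definition ALG :: "'s set \<Rightarrow> ('s \<Rightarrow> real) \<Rightarrow> ('d \<times> 's) set \<Rightarrow> ('d \<times> 's) set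
    \<Rightarrow> ('d \<times> 's \<Rightarrow> real) \<Rightarrow> ('d \<times> 's \<Rightarrow> real) \<Rightarrow> real" where
  "ALG S w E1 E2 x y = (\<Sum>j\<in>S. w j * (load_off E1 x j + load_off E2 y j))"

end

theory Submission
  imports Defs
begin

lemma matching_fst: "is_matching M \<Longrightarrow> e \<in> M \<Longrightarrow> e' \<in> M \<Longrightarrow> fst e = fst e' \<Longrightarrow> e = e'"
  unfolding is_matching_def by blast

lemma load_on_ind:
  assumes "finite E" "is_matching M" "M \<subseteq> E" "\<And>e. e \<in> M \<Longrightarrow> c (snd e) \<le> 1"
  shows "load_on E (\<lambda>e. if e \<in> M then c (snd e) else 0) i \<le> 1"
proof (cases "\<exists>e0\<in>M. fst e0 = i")
  case True
  then obtain e0 where e0: "e0 \<in> M" "fst e0 = i" by auto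
  have "load_on E (\<lambda>e. if e \<in> M then c (snd e) else 0) i
      = (\<Sum>e\<in>{e\<in>E. fst e = i}. if e = e0 then c (snd e0) else 0)"
    unfolding load_on_def
  proof (rule sum.cong)
    fix x assume x: "x \<in> {e\<in>E. fst e = i}"
    show "(if x \<in> M then c (snd x) else 0) = (if x = e0 then c (snd e0) else 0)"
    proof (cases "x \<in> M")
      case True
      have "fst x = fst e0" using x e0(2) by simp
      then have "x = e0" using matching_fst[OF assms(2) True e0(1)] by blast
      then show ?thesis using True by simp
    next
      case False
      then show ?thesis using e0(1) by metis
    qed
  qed simp
  also have "\<dots> = c (snd e0)"
  proof -
    have "e0 \<in> {e\<in>E. fst e = i}" using e0 assms(3) by blast
    then show ?thesis using assms(1) by (simp add: sum.delta')
  qed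
  finally show ?thesis using assms(4)[OF e0(1)] by simp
next
  case False
  have "load_on E (\<lambda>e. if e \<in> M then c (snd e) else 0) i = 0"
    unfolding load_on_def
  proof (rule sum.neutral, rule ballI)
    fix x assume "x \<in> {e\<in>E. fst e = i}"
    then show "(if x \<in> M then c (snd x) else 0) = 0" using False by auto
  qed
  then show ?thesis by simp
qed
lemma pa:
  fixes f :: "real \<Rightarrow> real" and R x :: real
  assumes R: "R \<le> 3/4" and mono: "mono_on {0..1} f"
    and bnd: "\<forall>x\<in>{0<..<1}. 1 - (1 - R) / x \<le> f x \<and> f x \<le> (1 - R) / (1 - x)"
    and x: "0 \<le> x" "x \<le> 1"
  shows "(1 - x) * f x \<le> 1 - R"
proof -
  consider "x = 0" | "x = 1" | "0 < x \<and> x < 1" using x by linarith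
  then show ?thesis
  proof cases
    case 1
    show ?thesis
    proof (rule ccontr)
      assume "\<not> ?thesis"
      then have gt: "f 0 > 1 - R" using 1 by simp
      define d where "d = f 0 - (1 - R)"
      have d: "d > 0" using gt d_def by simp
      have f0: "f 0 > 0" using gt R by simp
      define x0 where "x0 = d / (2 * f 0)"
      have x0pos: "x0 > 0" using d f0 x0_def by simp
      have "d \<le> f 0" using d_def R by simp
      then have "x0 \<le> 1/2" using f0 unfolding x0_def by (simp add: field_simps)
      then have x0: "x0 \<in> {0<..<1}" using x0pos by simp
      have "f 0 \<le> f x0" using mono x0 unfolding mono_on_def by auto
      also have "\<dots> \<le> (1 - R) / (1 - x0)" using bnd x0 by auto
      finally have "f 0 * (1 - x0) \<le> 1 - R" using x0 by (simp add: field_simps)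
      moreover have "f 0 * (1 - x0) = f 0 - d / 2" unfolding x0_def using f0 by (simp add: field_simps)
      ultimately show False using d d_def by linarith
    qed
  next
    case 2 then show ?thesis using R by simp
  next
    case 3
    then have "f x \<le> (1 - R) / (1 - x)" using bnd by auto
    then show ?thesis using 3 by (simp add: field_simps)
  qed
qed

lemma pb:
  fixes f :: "real \<Rightarrow> real" and R x :: real
  assumes R: "R \<le> 3/4"
    and bnd: "\<forall>x\<in>{0<..<1}. 1 - (1 - R) / x \<le> f x \<and> f x \<le> (1 - R) / (1 - x)"
    and f1: "R \<le> f 1"
    and x: "0 \<le> x" "x \<le> 1"
  shows "R \<le> x * f x + (1 - x)"
proof -
  consider "x = 0" | "x = 1" | "0 < x \<and> x < 1" using x by linarith
  then show ?thesis
  proof cases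
    case 1 then show ?thesis using R by simp
  next
    case 2 then show ?thesis using f1 by simp
  next
    case 3
    then have "1 - (1 - R) / x \<le> f x" using bnd by auto
    then show ?thesis using 3 by (simp add: field_simps)
  qed
qed

lemma conv01:
  fixes a b t :: real
  assumes "0 \<le> a" "a \<le> 1" "0 \<le> b" "b \<le> 1" "0 \<le> t" "t \<le> 1"
  shows "0 \<le> (1 - t) * a + t * b \<and> (1 - t) * a + t * b \<le> 1"
proof -
  have "(1 - t) * a \<le> (1 - t) * 1" using assms by (intro mult_left_mono) auto
  moreover have "t * b \<le> t * 1" using assms by (intro mult_left_mono) auto
  moreover have "0 \<le> (1 - t) * a" "0 \<le> t * b" using assms by auto
  ultimately show ?thesis by simp
qed


lemma matching_snd: "is_matching M \<Longrightarrow> e \<in> M \<Longrightarrow> e' \<in> M \<Longrightarrow> snd e = snd e' \<Longrightarrow> e = e'"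
  unfolding is_matching_def by blast

lemma load_off_ind:
  assumes "finite E" "is_matching M" "M \<subseteq> E"
  shows "load_off E (\<lambda>e. if e \<in> M then c (snd e) else 0) j = (if j \<in> snd ` M then c j else 0)"
proof (cases "j \<in> snd ` M")
  case True
  then obtain e0 where e0: "e0 \<in> M" "snd e0 = j" by auto
  have "load_off E (\<lambda>e. if e \<in> M then c (snd e) else 0) j
      = (\<Sum>e\<in>{e\<in>E. snd e = j}. if e = e0 then c j else 0)"
    unfolding load_off_def
  proof (rule sum.cong)
    fix x assume x: "x \<in> {e\<in>E. snd e = j}"
    show "(if x \<in> M then c (snd x) else 0) = (if x = e0 then c j else 0)"
    proof (cases "x \<in> M")
      case True
      have "snd x = snd e0" using x e0(2) by simp
      then have "x = e0" using matching_snd[OF assms(2) True e0(1)] by blast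
      then show ?thesis using True e0(2) by simp
    next
      case False
      then show ?thesis using e0(1) by metis
    qed
  qed simp
  also have "\<dots> = c j"
  proof -
    have "e0 \<in> {e\<in>E. snd e = j}" using e0 assms(3) by blast
    then show ?thesis using assms(1) by (simp add: sum.delta')
  qed
  finally show ?thesis using True by simp
next
  case False
  have "load_off E (\<lambda>e. if e \<in> M then c (snd e) else 0) j = 0"
    unfolding load_off_def
  proof (rule sum.neutral, rule ballI)
    fix x assume "x \<in> {e\<in>E. snd e = j}"
    then show "(if x \<in> M then c (snd x) else 0) = 0" using False by force
  qed
  then show ?thesis using False by simp
qed

lemma g_diff:
  fixes f :: "real \<Rightarrow> real"
  assumes mono: "mono_on {0..1} f" and cont: "continuous_on {0..1} f"
    and u: "u \<in> {0..1}" and v: "v \<in> {0..1}"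
  shows "(u - integral {0..u} f) - (v - integral {0..v} f) \<ge> (u - v) * (1 - f u)"
proof -
  have int01: "f integrable_on {0..1}" using cont by (rule integrable_continuous_real)
  have int: "f integrable_on {a..b}" if "0 \<le> a" "b \<le> 1" for a b
    using integrable_on_subinterval[OF int01] that by auto
  show ?thesis
  proof (cases "v \<le> u")
    case True
    have c: "integral {0..v} f + integral {v..u} f = integral {0..u} f"
      using Henstock_Kurzweil_Integration.integral_combine[of 0 v u f] True u v int[of 0 u] by auto
    have "integral {v..u} f \<le> integral {v..u} (\<lambda>_. f u)"
      apply (rule integral_le)
      using int[of v u] u v apply auto[2]
      using mono u v unfolding mono_on_def by auto
    also have "\<dots> = (u - v) * f u" using True by simp
    finally show ?thesis using c by (simp add: algebra_simps)
  next
    case False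
    have c: "integral {0..u} f + integral {u..v} f = integral {0..v} f"
      using Henstock_Kurzweil_Integration.integral_combine[of 0 u v f] False u v int[of 0 v] by auto
    have "integral {u..v} (\<lambda>_. f u) \<le> integral {u..v} f"
      apply (rule integral_le)
      using int[of u v] u v apply auto[2]
      using mono u v unfolding mono_on_def by auto
    moreover have "integral {u..v} (\<lambda>_. f u) = (v - u) * f u" using False by simp
    ultimately show ?thesis using c by (simp add: algebra_simps)
  qed
qed

lemma lim0:
  fixes h :: "real \<Rightarrow> real"
  assumes "continuous_on {0..1} h" "\<And>t. 0 < t \<Longrightarrow> t \<le> 1 \<Longrightarrow> h t \<le> 0"
  shows "h 0 \<le> 0"
proof -
  have "(h \<longlongrightarrow> h 0) (at 0 within {0..1})"
    using assms(1) unfolding continuous_on_def by auto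
  moreover have "at (0::real) within {0..1} \<noteq> bot"
    by (simp add: trivial_limit_within)
  moreover have "\<forall>\<^sub>F t in at 0 within {0..1}. h t \<le> 0"
    unfolding eventually_at_filter using assms(2) by auto
  ultimately show ?thesis
    using tendsto_le[of "at 0 within {0..1}" "\<lambda>_. 0" 0 h "h 0"] by auto
qed

theorem theorem1:
  fixes D1 D2 :: "'d set" and S :: "'s set" and E1 E2 A :: "('d \<times> 's) set"
    and w :: "'s \<Rightarrow> real" and f :: "'s \<Rightarrow> real \<Rightarrow> real" and R :: real
    and xbar ybar :: "'d \<times> 's \<Rightarrow> real"
  assumes R: "0 \<le> R" "R \<le> 3/4"
    and fin: "finite D1" "finite D2" "finite S"
    and disj: "D1 \<inter> D2 = {}"
    and E1: "E1 \<subseteq> D1 \<times> S" and E2: "E2 \<subseteq> D2 \<times> S"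
    and w: "\<forall>j\<in>S. 0 \<le> w j"
    and A: "A \<subseteq> E1" "is_matching A"
    and f_range: "\<forall>j\<in>S. \<forall>x\<in>{0..1}. 0 \<le> f j x \<and> f j x \<le> 1"
    and f_cont: "\<forall>j\<in>S. continuous_on {0..1} (f j)"
    and f_mono: "\<forall>j\<in>S. mono_on {0..1} (f j)"
    and f_bounds: "\<forall>j\<in>S. \<forall>x\<in>{0<..<1}.
                     1 - (1 - R) / x \<le> f j x \<and> f j x \<le> (1 - R) / (1 - x)"
    and f_one: "\<forall>j\<in>S. R \<le> f j 1"
    and opt1: "optimal1 D1 S w f E1 xbar"
    and opt2: "optimal2 D2 S w E2 (load_off E1 xbar) ybar"
  shows "ALG S w E1 E2 xbar ybar \<ge> R * OPT w (E1 \<union> E2)"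
proof -
  define xs where "xs = load_off E1 xbar"
  define ys where "ys = load_off E2 ybar"
  have finE1: "finite E1" using E1 fin finite_subset by blast
  have finE2: "finite E2" using E2 fin finite_subset by blast
  have feas1: "feasible1 D1 S E1 xbar" using opt1 unfolding optimal1_def by simp
  have xs01: "0 \<le> xs j \<and> xs j \<le> 1" if "j \<in> S" for j
  proof -
    have "0 \<le> xs j" unfolding xs_def load_off_def
      using feas1 unfolding feasible1_def by (intro sum_nonneg) auto
    moreover have "xs j \<le> 1" using feas1 that unfolding feasible1_def xs_def by auto
    ultimately show ?thesis by simp
  qed
  define Ms where "Ms = {M. M \<subseteq> E1 \<union> E2 \<and> is_matching M}"
  have finMs: "finite Ms" unfolding Ms_def using finE1 finE2
    by (metis (no_types, lifting) Collect_mono Pow_def finite_Pow_iff finite_UnI finite_subset)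
  have "{(\<Sum>j\<in>snd ` M. w j) | M. M \<subseteq> E1 \<union> E2 \<and> is_matching M} = (\<lambda>M. \<Sum>j\<in>snd ` M. w j) ` Ms"
    unfolding Ms_def by blast
  moreover have "{} \<in> Ms" unfolding Ms_def is_matching_def by simp
  ultimately have "OPT w (E1 \<union> E2) \<in> (\<lambda>M. \<Sum>j\<in>snd ` M. w j) ` Ms"
    unfolding OPT_def using finMs by (metis (no_types, lifting) Max_in empty_iff finite_imageI image_is_empty)
  then obtain M where M: "M \<subseteq> E1 \<union> E2" "is_matching M" "OPT w (E1 \<union> E2) = (\<Sum>j\<in>snd ` M. w j)"
    unfolding Ms_def by auto
  define M1 where "M1 = M \<inter> E1"
  define M2 where "M2 = M \<inter> E2"
  define J1 where "J1 = snd ` M1"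
  define J2 where "J2 = snd ` M2"
  have M1m: "is_matching M1" using M(2) unfolding M1_def is_matching_def by blast
  have M2m: "is_matching M2" using M(2) unfolding M2_def is_matching_def by blast
  have J1S: "J1 \<subseteq> S" unfolding J1_def M1_def using E1 by auto
  have J2S: "J2 \<subseteq> S" unfolding J2_def M2_def using E2 by auto
  have finJ1: "finite J1" using J1S fin finite_subset by blast
  have finJ2: "finite J2" using J2S fin finite_subset by blast
  have J12: "J1 \<inter> J2 = {}"
  proof (rule ccontr)
    assume "J1 \<inter> J2 \<noteq> {}"
    then obtain e1 e2 where e: "e1 \<in> M1" "e2 \<in> M2" "snd e1 = snd e2"
      unfolding J1_def J2_def by auto
    have "e1 = e2" using matching_snd[OF M(2)] e unfolding M1_def M2_def by blast
    moreover have "fst e1 \<in> D1" "fst e2 \<in> D2" using e E1 E2 unfolding M1_def M2_def by auto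
    ultimately show False using disj by auto
  qed
  have JM: "snd ` M = J1 \<union> J2" unfolding J1_def J2_def M1_def M2_def using M(1) by blast
  define y' where "y' = (\<lambda>e. if e \<in> M2 then (\<lambda>j. 1 - xs j) (snd e) else 0)"
  have M2E2: "M2 \<subseteq> E2" unfolding M2_def by blast
  have M1E1: "M1 \<subseteq> E1" unfolding M1_def by blast
  have y'off: "load_off E2 y' j = (if j \<in> J2 then 1 - xs j else 0)" for j
    unfolding y'_def J2_def using load_off_ind[OF finE2 M2m M2E2, of "\<lambda>j. 1 - xs j" j] by simp
  have feas2: "feasible2 D2 S E2 xs y'"
    unfolding feasible2_def
  proof (intro conjI ballI)
    fix e assume "e \<in> E2"
    then show "0 \<le> y' e" unfolding y'_def using xs01 E2 by auto
  next
    fix i assume "i \<in> D2"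
    show "load_on E2 y' i \<le> 1" unfolding y'_def
      apply (rule load_on_ind[OF finE2 M2m M2E2])
      using xs01 E2 M2E2 by fastforce
  next
    fix j assume "j \<in> S"
    then show "load_off E2 y' j \<le> 1 - xs j" using y'off xs01 by auto
  qed
  have "obj2 S w E2 y' \<le> obj2 S w E2 ybar"
    using opt2 feas2 unfolding optimal2_def xs_def by blast
  moreover have "obj2 S w E2 y' = (\<Sum>j\<in>J2. w j * (1 - xs j))"
  proof -
    have "obj2 S w E2 y' = (\<Sum>j\<in>S. if j \<in> J2 then w j * (1 - xs j) else 0)"
      unfolding obj2_def y'off by (rule sum.cong) auto
    also have "\<dots> = (\<Sum>j\<in>J2. w j * (1 - xs j))"
      using fin(3) J2S by (simp add: sum.If_cases Int_absorb1)
    finally show ?thesis .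
  qed
  ultimately have stage2: "(\<Sum>j\<in>J2. w j * (1 - xs j)) \<le> (\<Sum>j\<in>S. w j * ys j)"
    unfolding obj2_def ys_def by simp
  define xo :: "'s \<Rightarrow> real" where "xo = (\<lambda>j. if j \<in> J1 then 1 else 0)"
  define x' where "x' = (\<lambda>e. if e \<in> M1 then (\<lambda>j. 1::real) (snd e) else 0)"
  have x'off: "load_off E1 x' j = xo j" for j
    unfolding x'_def xo_def J1_def using load_off_ind[OF finE1 M1m M1E1, of "\<lambda>j. 1" j] by simp
  have x'on: "load_on E1 x' i \<le> 1" for i
    unfolding x'_def by (rule load_on_ind[OF finE1 M1m M1E1]) simp
  define xt where "xt = (\<lambda>t e. (1 - t) * xbar e + t * x' e)"
  have xtoff: "load_off E1 (xt t) j = (1 - t) * xs j + t * xo j" for t j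
    unfolding xt_def xs_def x'off[symmetric] load_off_def
    by (simp add: sum.distrib sum_distrib_left)
  have xton: "load_on E1 (xt t) i = (1 - t) * load_on E1 xbar i + t * load_on E1 x' i" for t i
    unfolding xt_def load_on_def
    by (simp add: sum.distrib sum_distrib_left)
  have xo01: "0 \<le> xo j \<and> xo j \<le> 1" for j unfolding xo_def by auto
  have u01: "(1 - t) * xs j + t * xo j \<in> {0..1}" if "j \<in> S" "0 \<le> t" "t \<le> 1" for j t
    using conv01[of "xs j" "xo j" t] xs01[OF that(1)] xo01[of j] that by auto
  have feast: "feasible1 D1 S E1 (xt t)" if t: "0 \<le> t" "t \<le> 1" for t
    unfolding feasible1_def
  proof (intro conjI ballI)
    fix e assume "e \<in> E1"
    then show "0 \<le> xt t e" using feas1 t unfolding feasible1_def xt_def x'_def by auto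
  next
    fix i assume "i \<in> D1"
    then have "0 \<le> load_on E1 xbar i \<and> load_on E1 xbar i \<le> 1"
      using feas1 unfolding feasible1_def load_on_def by (auto intro!: sum_nonneg)
    moreover have "0 \<le> load_on E1 x' i" unfolding load_on_def x'_def by (auto intro!: sum_nonneg)
    ultimately show "load_on E1 (xt t) i \<le> 1" unfolding xton
      using conv01[of "load_on E1 xbar i" "load_on E1 x' i" t] x'on[of i] t by auto
  next
    fix j assume "j \<in> S"
    then show "load_off E1 (xt t) j \<le> 1" unfolding xtoff using u01 t by auto
  qed
  define h where "h = (\<lambda>t. \<Sum>j\<in>S. w j * (xo j - xs j) * (1 - f j ((1 - t) * xs j + t * xo j)))"
  have hle: "h t \<le> 0" if t: "0 < t" "t \<le> 1" for t
  proof -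
    have "obj1 S w f E1 (xt t) \<le> obj1 S w f E1 xbar"
      using opt1 feast[of t] t unfolding optimal1_def by auto
    moreover have "t * h t \<le> obj1 S w f E1 (xt t) - obj1 S w f E1 xbar"
    proof -
      have "t * h t = (\<Sum>j\<in>S. w j * (((1 - t) * xs j + t * xo j - xs j) * (1 - f j ((1 - t) * xs j + t * xo j))))"
        unfolding h_def sum_distrib_left by (rule sum.cong) (auto simp: algebra_simps)
      also have "\<dots> \<le> (\<Sum>j\<in>S. w j * ((((1 - t) * xs j + t * xo j) - integral {0..(1 - t) * xs j + t * xo j} (f j))
                   - (xs j - integral {0..xs j} (f j))))"
      proof (rule sum_mono)
        fix j assume j: "j \<in> S"
        show "w j * (((1 - t) * xs j + t * xo j - xs j) * (1 - f j ((1 - t) * xs j + t * xo j)))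
          \<le> w j * ((((1 - t) * xs j + t * xo j) - integral {0..(1 - t) * xs j + t * xo j} (f j))
                   - (xs j - integral {0..xs j} (f j)))"
          apply (rule mult_left_mono)
           apply (rule g_diff)
          using j f_mono f_cont u01[of j t] t xs01[OF j] w by auto
      qed
      also have "\<dots> = obj1 S w f E1 (xt t) - obj1 S w f E1 xbar"
        unfolding obj1_def xtoff xs_def[symmetric] sum_subtractf[symmetric]
        by (rule sum.cong) (auto simp: algebra_simps)
      finally show ?thesis .
    qed
    ultimately have "t * h t \<le> 0" by simp
    then show ?thesis using t by (simp add: mult_le_0_iff)
  qed
  have hcont: "continuous_on {0..1} h"
    unfolding h_def
  proof (intro continuous_intros)
    fix j assume j: "j \<in> S"
    show "continuous_on {0..1} (\<lambda>t. f j ((1 - t) * xs j + t * xo j))"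
      apply (rule continuous_on_compose2[of "{0..1}" "f j"])
      using f_cont j apply simp
        apply (intro continuous_intros)
      using u01[OF j] by auto
  qed
  have "h 0 \<le> 0" using lim0[OF hcont hle] by simp
  define c where "c = (\<lambda>j. w j * (1 - f j (xs j)))"
  have h0: "(\<Sum>j\<in>S. c j * xo j) \<le> (\<Sum>j\<in>S. c j * xs j)"
  proof -
    have "h 0 = (\<Sum>j\<in>S. c j * xo j) - (\<Sum>j\<in>S. c j * xs j)"
      unfolding h_def c_def sum_subtractf[symmetric] by (rule sum.cong) (auto simp: algebra_simps)
    then show ?thesis using \<open>h 0 \<le> 0\<close> by simp
  qed
  have stage1: "(\<Sum>j\<in>J1. c j) \<le> (\<Sum>j\<in>S. c j * xs j)"
  proof -
    have "(\<Sum>j\<in>S. c j * xo j) = (\<Sum>j\<in>S. if j \<in> J1 then c j else 0)"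
      unfolding xo_def by (rule sum.cong) auto
    also have "\<dots> = (\<Sum>j\<in>J1. c j)" using fin(3) J1S by (simp add: sum.If_cases Int_absorb1)
    finally show ?thesis using h0 by simp
  qed
  define a where "a = (\<lambda>j. w j * xs j * f j (xs j))"
  have a0: "0 \<le> a j" if "j \<in> S" for j
    unfolding a_def using w that xs01[OF that] f_range by auto
  have split: "(\<Sum>j\<in>S. w j * xs j) = (\<Sum>j\<in>S. c j * xs j) + (\<Sum>j\<in>S. a j)"
    unfolding c_def a_def sum.distrib[symmetric] by (rule sum.cong) (auto simp: algebra_simps)
  have asum: "(\<Sum>j\<in>J1. a j) + (\<Sum>j\<in>J2. a j) \<le> (\<Sum>j\<in>S. a j)"
  proof -
    have "(\<Sum>j\<in>J1. a j) + (\<Sum>j\<in>J2. a j) = (\<Sum>j\<in>J1 \<union> J2. a j)"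
      using sum.union_disjoint[OF finJ1 finJ2 J12, of a] by simp
    also have "\<dots> \<le> (\<Sum>j\<in>S. a j)"
      using J1S J2S a0 fin(3) by (intro sum_mono2) auto
    finally show ?thesis .
  qed
  have p1: "(\<Sum>j\<in>J1. R * w j) \<le> (\<Sum>j\<in>J1. c j + a j)"
  proof (rule sum_mono)
    fix j assume "j \<in> J1"
    then have j: "j \<in> S" using J1S by auto
    have "(1 - xs j) * f j (xs j) \<le> 1 - R"
      using pa[of R "f j" "xs j"] R f_mono f_bounds j xs01[OF j] by auto
    then have "R \<le> 1 - f j (xs j) + xs j * f j (xs j)" by (simp add: algebra_simps)
    then have "w j * R \<le> w j * (1 - f j (xs j) + xs j * f j (xs j))"
      using w j by (intro mult_left_mono) auto
    then show "R * w j \<le> c j + a j" unfolding c_def a_def by (simp add: algebra_simps)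
  qed
  have p2: "(\<Sum>j\<in>J2. R * w j) \<le> (\<Sum>j\<in>J2. a j + w j * (1 - xs j))"
  proof (rule sum_mono)
    fix j assume "j \<in> J2"
    then have j: "j \<in> S" using J2S by auto
    have "R \<le> xs j * f j (xs j) + (1 - xs j)"
      using pb[of R "f j" "xs j"] R f_one f_bounds j xs01[OF j] by auto
    then have "w j * R \<le> w j * (xs j * f j (xs j) + (1 - xs j))"
      using w j by (intro mult_left_mono) auto
    then show "R * w j \<le> a j + w j * (1 - xs j)" unfolding a_def by (simp add: algebra_simps)
  qed
  have "R * OPT w (E1 \<union> E2) = (\<Sum>j\<in>J1. R * w j) + (\<Sum>j\<in>J2. R * w j)"
    unfolding M(3) JM sum_distrib_left[symmetric] using sum.union_disjoint[OF finJ1 finJ2 J12, of w]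
    by (simp add: distrib_left)
  also have "\<dots> \<le> (\<Sum>j\<in>J1. c j) + (\<Sum>j\<in>J1. a j) + (\<Sum>j\<in>J2. a j) + (\<Sum>j\<in>J2. w j * (1 - xs j))"
    using p1 p2 by (simp add: sum.distrib)
  also have "\<dots> \<le> (\<Sum>j\<in>S. w j * xs j) + (\<Sum>j\<in>S. w j * ys j)"
    using stage1 stage2 asum split by linarith
  also have "\<dots> = ALG S w E1 E2 xbar ybar"
    unfolding ALG_def xs_def ys_def by (simp add: sum.distrib algebra_simps)
  finally show ?thesis .
qed

end
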